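(* Let $T$ be a linear trellis. If $T$ is nonmergeable and one-to-one, then $T$ is connected and fragment one-to-one. Conversely, if $T$ is almost reduced, connected and fragment one-to-one, then $T$ is nonmergeable and one-to-one.
   Context: Let $\mathbb{F}$ be a finite field and $n\ge1$; indices are taken in $\mathbb{Z}_n$. A trellis $T$ of length $n$ over $\mathbb{F}$ consists of pairwise disjoint finite vertex sets $V_i(T)$, $i\in\mathbb{Z}_n$, and edge sets $E_i(T)\subseteq V_i(T)\times\mathbb{F}\times V_{i+1}(T)$; $(v,\alpha,w)\in E_i(T)$ is an edge from $v$ to $w$ with label $\alpha$. Trellises are trim. $T$ is linear if each $V_i(T)$ is an $\mathbb{F}$-vector space and each $E_i(T)$ a subspace. A path of length $m$ is $v_0\alpha_0v_1\cdots\alpha_{m-1}v_m$ with each $(v_j,\alpha_j,v_{j+1})$ an edge; its label sequence is $\alpha_0\cdots\alpha_{m-1}$. A cycle is a closed path of length $n$ starting in $V_0(T)$; $C(T)$ is the set of label sequences of cycles. $T$ is one-to-one if distinct cycles have distinct label sequences; almost reduced if every vertex lies on a cycle; connected if for any two distinct vertices $v,w$ there is a directed path from $v$ to $w$. $T$ is mergeable if for some $i$ and $v\ne w\in V_i(T)$, identifying $v$ and $w$ yields a trellis representing the same code; otherwise nonmergeable. $T$ is fragment one-to-one if any two distinct paths of length $n$ starting in the same vertex set $V_i(T)$ (for any $i$) have distinct label sequences. *)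

theory Defs
  imports Main
begin

text \<open>A trellis of length n: vertex sets V i and edge sets E i for i < n
  (indices in Z_n realised as {0..<n} with successor (i+1) mod n).
  Labels come from a finite field of type 'f.\<close>

definition nxt :: "nat \<Rightarrow> nat \<Rightarrow> nat" where
  "nxt n i = Suc i mod n"

definition prv :: "nat \<Rightarrow> nat \<Rightarrow> nat" where
  "prv n i = (i + n - 1) mod n"

definition vertices :: "nat \<Rightarrow> (nat \<Rightarrow> 'v set) \<Rightarrow> 'v set" where
  "vertices n V = (\<Union>i<n. V i)"

definition edges :: "nat \<Rightarrow> (nat \<Rightarrow> ('v \<times> 'f \<times> 'v) set) \<Rightarrow> ('v \<times> 'f \<times> 'v) set" where
  "edges n E = (\<Union>i<n. E i)"

definition trellis :: "nat \<Rightarrow> (nat \<Rightarrow> 'v set) \<Rightarrow> (nat \<Rightarrow> ('v \<times> 'f::{field,finite} \<times> 'v) set) \<Rightarrow> bool" where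
  "trellis n V E \<longleftrightarrow> n \<ge> 1
     \<and> (\<forall>i<n. finite (V i))
     \<and> (\<forall>i<n. \<forall>j<n. i \<noteq> j \<longrightarrow> V i \<inter> V j = {})
     \<and> (\<forall>i<n. E i \<subseteq> V i \<times> UNIV \<times> V (nxt n i))
     \<and> (\<forall>i<n. \<forall>v\<in>V i. (\<exists>a w. (v, a, w) \<in> E i) \<and> (\<exists>u a. (u, a, v) \<in> E (prv n i)))"

definition vector_space_on :: "'v set \<Rightarrow> ('v \<Rightarrow> 'v \<Rightarrow> 'v) \<Rightarrow> 'v \<Rightarrow> ('f::field \<Rightarrow> 'v \<Rightarrow> 'v) \<Rightarrow> bool" where
  "vector_space_on S add z sm \<longleftrightarrow>
     z \<in> S
     \<and> (\<forall>x\<in>S. \<forall>y\<in>S. add x y \<in> S)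
     \<and> (\<forall>a. \<forall>x\<in>S. sm a x \<in> S)
     \<and> (\<forall>x\<in>S. \<forall>y\<in>S. \<forall>w\<in>S. add (add x y) w = add x (add y w))
     \<and> (\<forall>x\<in>S. \<forall>y\<in>S. add x y = add y x)
     \<and> (\<forall>x\<in>S. add z x = x)
     \<and> (\<forall>x\<in>S. \<exists>y\<in>S. add x y = z)
     \<and> (\<forall>a. \<forall>x\<in>S. \<forall>y\<in>S. sm a (add x y) = add (sm a x) (sm a y))
     \<and> (\<forall>a b. \<forall>x\<in>S. sm (a + b) x = add (sm a x) (sm b x))
     \<and> (\<forall>a b. \<forall>x\<in>S. sm (a * b) x = sm a (sm b x))
     \<and> (\<forall>x\<in>S. sm 1 x = x)"

text \<open>Linear trellis: each V i carries an 'f-vector space structure and each E i is a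
  subspace of V i \<times> 'f \<times> V (i+1) (componentwise operations).\<close>
definition linear_trellis :: "nat \<Rightarrow> (nat \<Rightarrow> 'v set) \<Rightarrow> (nat \<Rightarrow> ('v \<times> 'f::{field,finite} \<times> 'v) set) \<Rightarrow> bool" where
  "linear_trellis n V E \<longleftrightarrow>
    (\<exists>(add :: nat \<Rightarrow> 'v \<Rightarrow> 'v \<Rightarrow> 'v) (z :: nat \<Rightarrow> 'v) (sm :: nat \<Rightarrow> 'f \<Rightarrow> 'v \<Rightarrow> 'v).
      \<forall>i<n. vector_space_on (V i) (add i) (z i) (sm i)
        \<and> (z i, 0, z (nxt n i)) \<in> E i
        \<and> (\<forall>(x, a, y)\<in>E i. \<forall>(x', a', y')\<in>E i.
              (add i x x', a + a', add (nxt n i) y y') \<in> E i)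
        \<and> (\<forall>s. \<forall>(x, a, y)\<in>E i. (sm i s x, s * a, sm (nxt n i) s y) \<in> E i))"

definition is_path :: "nat \<Rightarrow> (nat \<Rightarrow> ('v \<times> 'f \<times> 'v) set) \<Rightarrow> nat \<Rightarrow> 'v list \<Rightarrow> 'f list \<Rightarrow> bool" where
  "is_path n E m vs as \<longleftrightarrow> length vs = Suc m \<and> length as = m
     \<and> (\<forall>j<m. (vs ! j, as ! j, vs ! Suc j) \<in> edges n E)"

definition cycles :: "nat \<Rightarrow> (nat \<Rightarrow> 'v set) \<Rightarrow> (nat \<Rightarrow> ('v \<times> 'f \<times> 'v) set) \<Rightarrow> ('v list \<times> 'f list) set" where
  "cycles n V E = {(vs, as). is_path n E n vs as \<and> vs ! 0 \<in> V 0 \<and> vs ! n = vs ! 0}"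

definition code :: "nat \<Rightarrow> (nat \<Rightarrow> 'v set) \<Rightarrow> (nat \<Rightarrow> ('v \<times> 'f \<times> 'v) set) \<Rightarrow> 'f list set" where
  "code n V E = snd ` cycles n V E"

definition one_to_one :: "nat \<Rightarrow> (nat \<Rightarrow> 'v set) \<Rightarrow> (nat \<Rightarrow> ('v \<times> 'f \<times> 'v) set) \<Rightarrow> bool" where
  "one_to_one n V E \<longleftrightarrow> (\<forall>c\<in>cycles n V E. \<forall>d\<in>cycles n V E. c \<noteq> d \<longrightarrow> snd c \<noteq> snd d)"

definition almost_reduced :: "nat \<Rightarrow> (nat \<Rightarrow> 'v set) \<Rightarrow> (nat \<Rightarrow> ('v \<times> 'f \<times> 'v) set) \<Rightarrow> bool" where
  "almost_reduced n V E \<longleftrightarrow> (\<forall>v\<in>vertices n V. \<exists>(vs, as)\<in>cycles n V E. v \<in> set vs)"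

definition connected_trellis :: "nat \<Rightarrow> (nat \<Rightarrow> 'v set) \<Rightarrow> (nat \<Rightarrow> ('v \<times> 'f \<times> 'v) set) \<Rightarrow> bool" where
  "connected_trellis n V E \<longleftrightarrow> (\<forall>v\<in>vertices n V. \<forall>w\<in>vertices n V. v \<noteq> w \<longrightarrow>
     (\<exists>m vs as. is_path n E m vs as \<and> vs ! 0 = v \<and> vs ! m = w))"

definition mg :: "'v \<Rightarrow> 'v \<Rightarrow> 'v \<Rightarrow> 'v" where
  "mg v w x = (if x = w then v else x)"

definition merge_V :: "'v \<Rightarrow> 'v \<Rightarrow> (nat \<Rightarrow> 'v set) \<Rightarrow> nat \<Rightarrow> 'v set" where
  "merge_V v w V = (\<lambda>k. mg v w ` V k)"

definition merge_E :: "'v \<Rightarrow> 'v \<Rightarrow> (nat \<Rightarrow> ('v \<times> 'f \<times> 'v) set) \<Rightarrow> nat \<Rightarrow> ('v \<times> 'f \<times> 'v) set" where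
  "merge_E v w E = (\<lambda>k. (\<lambda>(x, a, y). (mg v w x, a, mg v w y)) ` E k)"

definition mergeable :: "nat \<Rightarrow> (nat \<Rightarrow> 'v set) \<Rightarrow> (nat \<Rightarrow> ('v \<times> 'f \<times> 'v) set) \<Rightarrow> bool" where
  "mergeable n V E \<longleftrightarrow> (\<exists>i<n. \<exists>v\<in>V i. \<exists>w\<in>V i. v \<noteq> w \<and>
     code n (merge_V v w V) (merge_E v w E) = code n V E)"

definition fragment_one_to_one :: "nat \<Rightarrow> (nat \<Rightarrow> 'v set) \<Rightarrow> (nat \<Rightarrow> ('v \<times> 'f \<times> 'v) set) \<Rightarrow> bool" where
  "fragment_one_to_one n V E \<longleftrightarrow> (\<forall>i<n. \<forall>vs as vs' as'.
     is_path n E n vs as \<and> vs ! 0 \<in> V i \<and> is_path n E n vs' as' \<and> vs' ! 0 \<in> V i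
     \<and> (vs, as) \<noteq> (vs', as') \<longrightarrow> as \<noteq> as')"

end

theory Submission
  imports Defs
begin


definition walk :: "nat \<Rightarrow> (nat \<Rightarrow> ('v \<times> 'f \<times> 'v) set) \<Rightarrow> (nat \<Rightarrow> 'v) \<Rightarrow> (nat \<Rightarrow> 'f) \<Rightarrow> nat \<Rightarrow> bool" where
  "walk n E f g m \<longleftrightarrow> (\<forall>j<m. (f j, g j, f (Suc j)) \<in> edges n E)"

definition rot :: "nat \<Rightarrow> nat \<Rightarrow> (nat \<Rightarrow> 'f) \<Rightarrow> 'f list" where
  "rot n i g = map (\<lambda>t. g ((t + (n - i)) mod n)) [0..<n]"

lemma is_path_walk: "is_path n E m vs as \<Longrightarrow> walk n E (nth vs) (nth as) m"
  unfolding is_path_def walk_def by auto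

lemma walk_is_path: "walk n E f g m \<Longrightarrow> is_path n E m (map f [0..<Suc m]) (map g [0..<m])"
  unfolding is_path_def walk_def by (auto simp del: upt_Suc)

lemma rot_cong: "(\<And>t. t < n \<Longrightarrow> g t = g' t) \<Longrightarrow> rot n i g = rot n i g'"
  unfolding rot_def by (intro map_cong) auto

lemma rot_eq: assumes "rot n i g = rot n i g'" "i < n" "t < n" shows "g t = g' t"
proof -
  define s where "s = (t + i) mod n"
  have s: "s < n" using assms by (simp add: s_def)
  have "(s + (n - i)) mod n = t"
  proof -
    have "(s + (n - i)) mod n = (t + i + (n - i)) mod n" unfolding s_def by (simp add: mod_add_left_eq)
    also have "t + i + (n - i) = t + n" using assms by simp
    finally show ?thesis using assms by simp
  qed
  moreover have "rot n i g ! s = rot n i g' ! s" using assms by simp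
  ultimately show ?thesis using s unfolding rot_def by simp
qed

lemma modz: assumes i: "(i::nat) < n" and h: "(i + m) mod n = i" shows "m mod n = 0"
proof -
  have r: "m mod n < n" using i by simp
  have h2: "(i + m mod n) mod n = i" using h by (simp add: mod_add_right_eq)
  show ?thesis
  proof (cases "i + m mod n < n")
    case True then show ?thesis using h2 by simp
  next
    case False
    have lt: "i + m mod n - n < n" using r i by linarith
    have "(i + m mod n) mod n = (i + m mod n - n) mod n" using False le_mod_geq[of n "i + m mod n"] by simp
    then have "(i + m mod n) mod n = i + m mod n - n" using lt by simp
    then show ?thesis using h2 r by simp
  qed
qed

locale trel =
  fixes n :: nat and V :: "nat \<Rightarrow> 'v set" and E :: "nat \<Rightarrow> ('v \<times> 'f::{field,finite} \<times> 'v) set"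
  assumes tr: "trellis n V E"
begin

lemma n_pos: "0 < n" using tr unfolding trellis_def by auto

lemma disj: "i < n \<Longrightarrow> j < n \<Longrightarrow> x \<in> V i \<Longrightarrow> x \<in> V j \<Longrightarrow> i = j"
  using tr unfolding trellis_def by blast

lemma Esub: "i < n \<Longrightarrow> (x, a, y) \<in> E i \<Longrightarrow> x \<in> V i \<and> y \<in> V (nxt n i)"
  using tr unfolding trellis_def by blast

lemma nxt_lt: "nxt n i < n" using n_pos unfolding nxt_def by simp

lemma nxt_mod: "nxt n ((i + j) mod n) = (i + Suc j) mod n"
  unfolding nxt_def by (simp add: mod_Suc_eq)

lemma level:
  assumes w: "walk n E f g m" and f0: "f 0 \<in> V i" and i: "i < n"
  shows "j \<le> m \<Longrightarrow> f j \<in> V ((i + j) mod n)"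
proof (induction j)
  case 0 then show ?case using f0 i by simp
next
  case (Suc j)
  then have "f j \<in> V ((i + j) mod n)" by simp
  moreover obtain k where k: "k < n" "(f j, g j, f (Suc j)) \<in> E k"
    using w Suc.prems unfolding walk_def edges_def by (metis Suc_le_lessD UN_E lessThan_iff)
  ultimately have "k = (i + j) mod n" using Esub disj n_pos by (meson mod_less_divisor)
  then show ?case using Esub[OF k] nxt_mod by metis
qed

lemma edge_level:
  assumes w: "walk n E f g m" and f0: "f 0 \<in> V i" and i: "i < n" and j: "j < m"
  shows "(f j, g j, f (Suc j)) \<in> E ((i + j) mod n)"
proof -
  have "f j \<in> V ((i + j) mod n)" using level[OF w f0 i] j by simp
  moreover obtain k where k: "k < n" "(f j, g j, f (Suc j)) \<in> E k"
    using w j unfolding walk_def edges_def by auto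
  ultimately have "k = (i + j) mod n" using Esub disj n_pos by (meson mod_less_divisor)
  then show ?thesis using k by simp
qed

lemma rotate_walk:
  assumes w: "walk n E f g n" and c: "f n = f 0"
  shows "walk n E (\<lambda>t. f ((t + r) mod n)) (\<lambda>t. g ((t + r) mod n)) n"
  unfolding walk_def
proof (intro allI impI)
  fix t assume t: "t < n"
  define s where "s = (t + r) mod n"
  have s: "s < n" using n_pos by (simp add: s_def)
  have e: "(f s, g s, f (Suc s)) \<in> edges n E" using w s unfolding walk_def by simp
  have "(Suc t + r) mod n = Suc s mod n" unfolding s_def by (simp add: mod_Suc_eq)
  moreover have "f (Suc s mod n) = f (Suc s)"
  proof (cases "Suc s < n")
    case True then show ?thesis by simp
  next
    case False then have "Suc s = n" using s by simp
    then show ?thesis using c by simp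
  qed
  ultimately show "(f ((t + r) mod n), g ((t + r) mod n), f ((Suc t + r) mod n)) \<in> edges n E"
    using e unfolding s_def by simp
qed

lemma C1:
  assumes w: "walk n E f g n" and c: "f n = f 0" and f0: "f 0 \<in> V i" and i: "i < n"
  shows "(map (\<lambda>t. f ((t + (n - i)) mod n)) [0..<Suc n], rot n i g) \<in> cycles n V E"
proof -
  let ?f = "\<lambda>t. f ((t + (n - i)) mod n)" and ?g = "\<lambda>t. g ((t + (n - i)) mod n)"
  have w': "walk n E ?f ?g n" by (rule rotate_walk[OF w c])
  have "?f 0 \<in> V ((i + (n - i) mod n) mod n)" using level[OF w f0 i, of "(n - i) mod n"] n_pos by simp
  moreover have "(i + (n - i) mod n) mod n = 0" using i by (simp add: mod_add_right_eq)
  ultimately have s: "?f 0 \<in> V 0" by simp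
  have "?f n = ?f 0" by simp
  then show ?thesis using walk_is_path[OF w'] s unfolding cycles_def rot_def
    by (simp del: upt_Suc)
qed

lemma C1': "walk n E f g n \<Longrightarrow> f n = f 0 \<Longrightarrow> f 0 \<in> V i \<Longrightarrow> i < n \<Longrightarrow> rot n i g \<in> code n V E"
  using C1 unfolding code_def by (metis image_eqI snd_conv)

lemma C2:
  assumes a: "as \<in> code n V E" and i: "i < n"
  shows "\<exists>f g. walk n E f g n \<and> f 0 \<in> V i \<and> f n = f 0 \<and> rot n i g = as"
proof -
  obtain vs where cy: "(vs, as) \<in> cycles n V E" using a unfolding code_def by force
  then have p: "is_path n E n vs as" and v0: "vs ! 0 \<in> V 0" and cl: "vs ! n = vs ! 0"
    unfolding cycles_def by auto
  have w0: "walk n E (nth vs) (nth as) n" using is_path_walk[OF p] .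
  let ?f = "\<lambda>t. vs ! ((t + i) mod n)" and ?g = "\<lambda>t. as ! ((t + i) mod n)"
  have w: "walk n E ?f ?g n" by (rule rotate_walk[OF w0 cl])
  have "?f 0 \<in> V i" using level[OF w0 v0 n_pos, of i] i by simp
  moreover have "?f n = ?f 0" by simp
  moreover have "rot n i ?g = as"
  proof (rule nth_equalityI)
    show "length (rot n i ?g) = length as" using p unfolding rot_def is_path_def by simp
    fix t assume "t < length (rot n i ?g)"
    then have t: "t < n" unfolding rot_def by simp
    have "((t + (n - i)) mod n + i) mod n = (t + (n - i) + i) mod n" by (simp add: mod_add_left_eq)
    also have "t + (n - i) + i = t + n" using i by simp
    finally have "((t + (n - i)) mod n + i) mod n = t" using t by simp
    then show "rot n i ?g ! t = as ! t" using t unfolding rot_def by simp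
  qed
  ultimately show ?thesis using w by blast
qed

lemma fwd: "v \<in> V k \<Longrightarrow> k < n \<Longrightarrow> \<exists>f g. walk n E f g m \<and> f 0 = v"
proof (induction m arbitrary: v k)
  case 0 then show ?case unfolding walk_def by auto
next
  case (Suc m)
  obtain a u where e: "(v, a, u) \<in> E k" using tr Suc.prems unfolding trellis_def by blast
  then have "u \<in> V (nxt n k)" using Esub Suc.prems by blast
  then obtain f g where fg: "walk n E f g m" "f 0 = u" using Suc.IH nxt_lt by blast
  have "walk n E (case_nat v f) (case_nat a g) (Suc m)"
    unfolding walk_def
  proof (intro allI impI)
    fix j assume "j < Suc m"
    then show "(case_nat v f j, case_nat a g j, case_nat v f (Suc j)) \<in> edges n E"
      using fg e Suc.prems unfolding walk_def edges_def by (cases j) auto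
  qed
  then show ?case by force
qed

lemma bwd: "w \<in> V k \<Longrightarrow> k < n \<Longrightarrow> \<exists>f g j. j < n \<and> walk n E f g m \<and> f m = w \<and> f 0 \<in> V j"
proof (induction m arbitrary: w k)
  case 0 then show ?case unfolding walk_def by auto
next
  case (Suc m)
  obtain f g j where fg: "j < n" "walk n E f g m" "f m = w" "f 0 \<in> V j" using Suc by blast
  obtain u a where e: "(u, a, f 0) \<in> E (prv n j)" using tr fg unfolding trellis_def by blast
  have pj: "prv n j < n" using n_pos unfolding prv_def by simp
  then have u: "u \<in> V (prv n j)" using Esub e by blast
  have "walk n E (case_nat u f) (case_nat a g) (Suc m)"
    unfolding walk_def
  proof (intro allI impI)
    fix i assume "i < Suc m"
    then show "(case_nat u f i, case_nat a g i, case_nat u f (Suc i)) \<in> edges n E"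
      using fg e pj unfolding walk_def edges_def by (cases i) auto
  qed
  then show ?case using u pj fg by force
qed

end




lemma mg_eq: "mg v w a = mg v w b \<Longrightarrow> a \<noteq> b \<Longrightarrow> (a = v \<and> b = w) \<or> (a = w \<and> b = v)"
  unfolding mg_def by (auto split: if_splits)

lemma trellis_merge:
  assumes tr: "trellis n V E" and i: "i < n" and v: "v \<in> V i" and w: "w \<in> V i"
  shows "trellis n (merge_V v w V) (merge_E v w E)"
proof -
  have n: "n \<ge> 1" using tr unfolding trellis_def by simp
  have fin: "\<forall>k<n. finite (merge_V v w V k)" using tr unfolding trellis_def merge_V_def by simp
  have dis: "\<forall>k<n. \<forall>l<n. k \<noteq> l \<longrightarrow> merge_V v w V k \<inter> merge_V v w V l = {}"
  proof (intro allI impI)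
    fix k l assume kl: "k < n" "l < n" "k \<noteq> l"
    have d: "\<And>x k l. k < n \<Longrightarrow> l < n \<Longrightarrow> x \<in> V k \<Longrightarrow> x \<in> V l \<Longrightarrow> k = l"
      using tr unfolding trellis_def by blast
    show "merge_V v w V k \<inter> merge_V v w V l = {}"
    proof (rule ccontr)
      assume "merge_V v w V k \<inter> merge_V v w V l \<noteq> {}"
      then obtain x y where xy: "x \<in> V k" "y \<in> V l" "mg v w x = mg v w y"
        unfolding merge_V_def by auto
      show False
      proof (cases "x = y")
        case True then show ?thesis using d[of k l x] xy kl by simp
      next
        case False
        then have "(x = v \<and> y = w) \<or> (x = w \<and> y = v)" using mg_eq[OF xy(3) False] by simp
        then have "x \<in> V i" "y \<in> V i" using v w by auto
        then have "k = i" "l = i" using d[of k i x] d[of l i y] xy kl i by auto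
        then show ?thesis using kl by simp
      qed
    qed
  qed
  have ed: "\<forall>k<n. merge_E v w E k \<subseteq> merge_V v w V k \<times> UNIV \<times> merge_V v w V (nxt n k)"
  proof (intro allI impI subsetI)
    fix k e assume k: "k < n" and e: "e \<in> merge_E v w E k"
    then obtain x a y where xay: "(x, a, y) \<in> E k" "e = (mg v w x, a, mg v w y)"
      unfolding merge_E_def by auto
    have "x \<in> V k" "y \<in> V (nxt n k)" using tr k xay(1) unfolding trellis_def by blast+
    then show "e \<in> merge_V v w V k \<times> UNIV \<times> merge_V v w V (nxt n k)"
      using xay(2) unfolding merge_V_def by auto
  qed
  have trim: "\<forall>k<n. \<forall>x\<in>merge_V v w V k. (\<exists>a y. (x, a, y) \<in> merge_E v w E k)
       \<and> (\<exists>u a. (u, a, x) \<in> merge_E v w E (prv n k))"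
  proof (intro allI impI ballI conjI)
    fix k x assume k: "k < n" and x: "x \<in> merge_V v w V k"
    then obtain x0 where x0: "x0 \<in> V k" "x = mg v w x0" unfolding merge_V_def by auto
    then obtain a y where "(x0, a, y) \<in> E k" using tr k unfolding trellis_def by blast
    then show "\<exists>a y. (x, a, y) \<in> merge_E v w E k" unfolding merge_E_def using x0 by force
    obtain u a where "(u, a, x0) \<in> E (prv n k)" using tr k x0 unfolding trellis_def by blast
    then show "\<exists>u a. (u, a, x) \<in> merge_E v w E (prv n k)" unfolding merge_E_def using x0 by force
  qed
  show ?thesis unfolding trellis_def using n fin dis ed trim by (intro conjI) assumption+
qed

lemma walk_merge: assumes "walk n E f g m" shows "walk n (merge_E v w E) (mg v w \<circ> f) g m"
  unfolding walk_def
proof (intro allI impI)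
  fix j assume "j < m"
  then obtain k where k: "k < n" "(f j, g j, f (Suc j)) \<in> E k"
    using assms unfolding walk_def edges_def by blast
  have "((mg v w \<circ> f) j, g j, (mg v w \<circ> f) (Suc j)) \<in> merge_E v w E k"
    unfolding merge_E_def using k(2) by (auto intro!: image_eqI[of _ _ "(f j, g j, f (Suc j))"])
  then show "((mg v w \<circ> f) j, g j, (mg v w \<circ> f) (Suc j)) \<in> edges n (merge_E v w E)"
    unfolding edges_def using k(1) by blast
qed

context trel begin

lemma merge_trel: "i < n \<Longrightarrow> v \<in> V i \<Longrightarrow> w \<in> V i \<Longrightarrow> trel n (merge_V v w V) (merge_E v w E)"
  unfolding trel_def by (rule trellis_merge[OF tr])

lemma code_sub:
  assumes i: "i < n" and v: "v \<in> V i" and w: "w \<in> V i"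
  shows "code n V E \<subseteq> code n (merge_V v w V) (merge_E v w E)"
proof
  interpret M: trel n "merge_V v w V" "merge_E v w E" using merge_trel[OF i v w] .
  fix as assume "as \<in> code n V E"
  then obtain f g where fg: "walk n E f g n" "f 0 \<in> V 0" "f n = f 0" "rot n 0 g = as"
    using C2 n_pos by blast
  have "walk n (merge_E v w E) (mg v w \<circ> f) g n" by (rule walk_merge[OF fg(1)])
  moreover have "(mg v w \<circ> f) 0 \<in> merge_V v w V 0" using fg unfolding merge_V_def by simp
  ultimately have "rot n 0 g \<in> code n (merge_V v w V) (merge_E v w E)"
    using M.C1'[of "mg v w \<circ> f" g 0] fg n_pos by simp
  then show "as \<in> code n (merge_V v w V) (merge_E v w E)" using fg by simp
qed

lemma lift:
  assumes i: "i < n" and v: "v \<in> V i" and w: "w \<in> V i" and vw: "v \<noteq> w"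
    and wf: "walk n (merge_E v w E) f' g n" and f0: "f' 0 \<in> merge_V v w V i" and cl: "f' n = f' 0"
  shows "\<exists>f. walk n E f g n \<and> f 0 \<in> V i \<and> (f n = f 0 \<or> (f 0 = v \<and> f n = w) \<or> (f 0 = w \<and> f n = v))"
proof -
  interpret M: trel n "merge_V v w V" "merge_E v w E" using merge_trel[OF i v w] .
  have "\<forall>j. \<exists>xy. j < n \<longrightarrow> (fst xy, g j, snd xy) \<in> edges n E \<and> mg v w (fst xy) = f' j
        \<and> mg v w (snd xy) = f' (Suc j)"
  proof
    fix j
    show "\<exists>xy. j < n \<longrightarrow> (fst xy, g j, snd xy) \<in> edges n E \<and> mg v w (fst xy) = f' j
        \<and> mg v w (snd xy) = f' (Suc j)"
    proof (cases "j < n")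
      case True
      then have "(f' j, g j, f' (Suc j)) \<in> edges n (merge_E v w E)" using wf unfolding walk_def by simp
      then obtain k x y where "k < n" "(x, g j, y) \<in> E k" "mg v w x = f' j" "mg v w y = f' (Suc j)"
        unfolding edges_def merge_E_def by auto
      then show ?thesis unfolding edges_def by (intro exI[of _ "(x, y)"]) auto
    qed simp
  qed
  then obtain XY where XY: "\<And>j. j < n \<Longrightarrow> (fst (XY j), g j, snd (XY j)) \<in> edges n E
     \<and> mg v w (fst (XY j)) = f' j \<and> mg v w (snd (XY j)) = f' (Suc j)" by metis
  define X where "X j = fst (XY j)" for j
  define Y where "Y j = snd (XY j)" for j
  have lv: "\<And>j. j < n \<Longrightarrow> X j \<in> V ((i + j) mod n) \<and> Y j \<in> V ((i + Suc j) mod n)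
     \<and> (X j, g j, Y j) \<in> E ((i + j) mod n)"
  proof -
    fix j assume j: "j < n"
    obtain k where k: "k < n" "(X j, g j, Y j) \<in> E k" using XY[OF j] unfolding X_def Y_def edges_def by auto
    have "f' j \<in> merge_V v w V ((i + j) mod n)" using M.level[OF wf f0 i] j by simp
    moreover have "f' j \<in> merge_V v w V k" using Esub[OF k] XY[OF j] unfolding X_def merge_V_def by (metis image_eqI)
    ultimately have "k = (i + j) mod n" using M.disj k n_pos by (meson mod_less_divisor)
    then show "X j \<in> V ((i + j) mod n) \<and> Y j \<in> V ((i + Suc j) mod n) \<and> (X j, g j, Y j) \<in> E ((i + j) mod n)"
      using Esub[OF k] k nxt_mod by metis
  qed
  have notvw: "\<And>x j. 0 < j \<Longrightarrow> j < n \<Longrightarrow> x \<in> V ((i + j) mod n) \<Longrightarrow> x \<noteq> v \<and> x \<noteq> w"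
  proof -
    fix x j assume j: "0 < j" "j < n" and x: "x \<in> V ((i + j) mod n)"
    have "(i + j) mod n \<noteq> i"
    proof
      assume "(i + j) mod n = i"
      then have "j mod n = 0" using modz i by blast
      then show False using j by simp
    qed
    moreover have "(i + j) mod n < n" using n_pos by simp
    ultimately show "x \<noteq> v \<and> x \<noteq> w" using x v w disj[of "(i + j) mod n" i x] i by auto
  qed
  have mgid: "\<And>x j. 0 < j \<Longrightarrow> j < n \<Longrightarrow> x \<in> V ((i + j) mod n) \<Longrightarrow> mg v w x = x"
    using notvw unfolding mg_def by auto
  define f where "f j = (if j < n then X j else Y (n - 1))" for j
  have chain: "\<And>j. Suc j < n \<Longrightarrow> Y j = X (Suc j)"
  proof -
    fix j assume j: "Suc j < n"
    have "Y j = mg v w (Y j)" using mgid[of "Suc j" "Y j"] lv[of j] j by simp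
    also have "\<dots> = f' (Suc j)" using XY[of j] j unfolding Y_def by simp
    also have "\<dots> = mg v w (X (Suc j))" using XY[of "Suc j"] j unfolding X_def by simp
    also have "\<dots> = X (Suc j)" using mgid[of "Suc j" "X (Suc j)"] lv[of "Suc j"] j by simp
    finally show "Y j = X (Suc j)" .
  qed
  have wk: "walk n E f g n" unfolding walk_def
  proof (intro allI impI)
    fix j assume j: "j < n"
    have "(X j, g j, Y j) \<in> edges n E" using XY[OF j] unfolding X_def Y_def by simp
    moreover have "f (Suc j) = Y j"
    proof (cases "Suc j < n")
      case True then show ?thesis using chain[of j] unfolding f_def by simp
    next
      case False then have "j = n - 1" using j by simp
      then have "\<not> Suc j < n" "j = n - 1" using n_pos by auto
      then show ?thesis unfolding f_def by simp
    qed
    ultimately show "(f j, g j, f (Suc j)) \<in> edges n E" using j unfolding f_def by simp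
  qed
  have s0: "f 0 \<in> V i" using lv[of 0] n_pos i unfolding f_def by simp
  have nn: "Suc (n - 1) = n" using n_pos by simp
  have "mg v w (f 0) = f' 0" using XY[of 0] n_pos unfolding f_def X_def by simp
  moreover have "mg v w (f n) = f' n" using XY[of "n - 1"] n_pos nn unfolding f_def Y_def by simp
  ultimately have "mg v w (f 0) = mg v w (f n)" using cl by simp
  then have "f n = f 0 \<or> (f 0 = v \<and> f n = w) \<or> (f 0 = w \<and> f n = v)" using mg_eq[of v w "f 0" "f n"] by auto
  then show ?thesis using wk s0 by blast
qed

end



context
  fixes S :: "'v set" and add :: "'v \<Rightarrow> 'v \<Rightarrow> 'v" and z :: 'v and sm :: "'f::field \<Rightarrow> 'v \<Rightarrow> 'v"
  assumes VS: "vector_space_on S add z sm"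
begin

lemma vs_all1: "z \<in> S"
  using VS unfolding vector_space_on_def apply (elim conjE) by assumption
lemma vs_all2: "\<forall>x\<in>S. \<forall>y\<in>S. add x y \<in> S"
  using VS unfolding vector_space_on_def apply (elim conjE) by assumption
lemma vs_all3: "\<forall>a. \<forall>x\<in>S. sm a x \<in> S"
  using VS unfolding vector_space_on_def apply (elim conjE) by assumption
lemma vs_all4: "\<forall>x\<in>S. \<forall>y\<in>S. \<forall>w\<in>S. add (add x y) w = add x (add y w)"
  using VS unfolding vector_space_on_def apply (elim conjE) by assumption
lemma vs_all5: "\<forall>x\<in>S. \<forall>y\<in>S. add x y = add y x"
  using VS unfolding vector_space_on_def apply (elim conjE) by assumption
lemma vs_all6: "\<forall>x\<in>S. add z x = x"
  using VS unfolding vector_space_on_def apply (elim conjE) by assumption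
lemma vs_all7: "\<forall>x\<in>S. \<exists>y\<in>S. add x y = z"
  using VS unfolding vector_space_on_def apply (elim conjE) by assumption
lemma vs_all8: "\<forall>a b. \<forall>x\<in>S. sm (a + b) x = add (sm a x) (sm b x)"
  using VS unfolding vector_space_on_def apply (elim conjE) by assumption
lemma vs_all9: "\<forall>x\<in>S. sm 1 x = x"
  using VS unfolding vector_space_on_def apply (elim conjE) by assumption

lemma vs_z: "z \<in> S" using vs_all1 by blast
lemma vs_add: "x \<in> S \<Longrightarrow> y \<in> S \<Longrightarrow> add x y \<in> S" using vs_all2 by blast
lemma vs_sm: "x \<in> S \<Longrightarrow> sm a x \<in> S" using vs_all3 by blast
lemma vs_assoc: "x \<in> S \<Longrightarrow> y \<in> S \<Longrightarrow> w \<in> S \<Longrightarrow> add (add x y) w = add x (add y w)"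
  using vs_all4 by blast
lemma vs_comm: "x \<in> S \<Longrightarrow> y \<in> S \<Longrightarrow> add x y = add y x" using vs_all5 by blast
lemma vs_zl: "x \<in> S \<Longrightarrow> add z x = x" using vs_all6 by blast
lemma vs_zr: "x \<in> S \<Longrightarrow> add x z = x" using vs_zl vs_comm vs_z by metis
lemma vs_inv: "x \<in> S \<Longrightarrow> \<exists>y\<in>S. add x y = z" using vs_all7 by blast
lemma vs_dist: "x \<in> S \<Longrightarrow> sm (a + b) x = add (sm a x) (sm b x)" using vs_all8 by blast
lemma vs_one: "x \<in> S \<Longrightarrow> sm 1 x = x" using vs_all9 by blast

lemma vs_zero: assumes x: "x \<in> S" shows "sm 0 x = z"
proof -
  let ?y = "sm 0 x"
  have y: "?y \<in> S" using vs_sm x .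
  have yy: "add ?y ?y = ?y" using vs_dist[OF x, of 0 0] by simp
  obtain y' where y': "y' \<in> S" "add ?y y' = z" using vs_inv[OF y] by blast
  have "z = add (add ?y ?y) y'" using yy y' by simp
  also have "\<dots> = add ?y (add ?y y')" using vs_assoc y y' by blast
  also have "\<dots> = ?y" using y' vs_zr y by simp
  finally show ?thesis by simp
qed

lemma vs_neg: assumes x: "x \<in> S" shows "add x (sm (-1) x) = z"
proof -
  have "sm (1 + -1) x = add (sm 1 x) (sm (-1) x)" using vs_dist x by blast
  then show ?thesis using vs_zero[OF x] vs_one[OF x] by simp
qed

lemma vs_c1: assumes "a \<in> S" "b \<in> S" shows "add (add a b) (sm (-1) b) = a"
  using assms vs_assoc vs_neg vs_zr vs_sm by metis

lemma vs_c2: assumes "a \<in> S" "b \<in> S" shows "add (add b a) (sm (-1) b) = a"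
  using assms vs_c1 vs_comm by metis

lemma vs_c3: assumes "a \<in> S" "b \<in> S" shows "add b (add a (sm (-1) b)) = a"
  using assms vs_c2 vs_assoc vs_sm by metis

lemma vs_eq: assumes "a \<in> S" "b \<in> S" "add a (sm (-1) b) = z" shows "a = b"
proof -
  have "add (add a (sm (-1) b)) b = add a (add (sm (-1) b) b)" using assms vs_assoc vs_sm by blast
  also have "add (sm (-1) b) b = z" using vs_neg vs_comm vs_sm assms by metis
  finally show ?thesis using assms vs_zl vs_zr by metis
qed

end

locale lin = trel n V E for n V and E :: "nat \<Rightarrow> ('v \<times> 'f::{field,finite} \<times> 'v) set" +
  fixes add :: "nat \<Rightarrow> 'v \<Rightarrow> 'v \<Rightarrow> 'v" and z :: "nat \<Rightarrow> 'v" and sm :: "nat \<Rightarrow> 'f \<Rightarrow> 'v \<Rightarrow> 'v"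
  assumes lin: "\<forall>i<n. vector_space_on (V i) (add i) (z i) (sm i)
        \<and> (z i, 0, z (nxt n i)) \<in> E i
        \<and> (\<forall>(x, a, y)\<in>E i. \<forall>(x', a', y')\<in>E i.
              (add i x x', a + a', add (nxt n i) y y') \<in> E i)
        \<and> (\<forall>s. \<forall>(x, a, y)\<in>E i. (sm i s x, s * a, sm (nxt n i) s y) \<in> E i)"
begin

lemma VS: "i < n \<Longrightarrow> vector_space_on (V i) (add i) (z i) (sm i)" using lin by blast
lemma Ez: "i < n \<Longrightarrow> (z i, 0, z (nxt n i)) \<in> E i" using lin by blast
lemma Eadd: "i < n \<Longrightarrow> (x, a, y) \<in> E i \<Longrightarrow> (x', a', y') \<in> E i \<Longrightarrow> (add i x x', a + a', add (nxt n i) y y') \<in> E i"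
  using lin by fast
lemma Esm: "i < n \<Longrightarrow> (x, a, y) \<in> E i \<Longrightarrow> (sm i s x, s * a, sm (nxt n i) s y) \<in> E i"
  using lin by fast

lemma inE: "k < n \<Longrightarrow> e \<in> E k \<Longrightarrow> e \<in> edges n E" unfolding edges_def by blast

lemma walk_add:
  assumes i: "i < n" and w1: "walk n E f1 g1 m" and w2: "walk n E f2 g2 m"
    and s1: "f1 0 \<in> V i" and s2: "f2 0 \<in> V i"
  shows "walk n E (\<lambda>j. add ((i + j) mod n) (f1 j) (f2 j)) (\<lambda>j. g1 j + g2 j) m"
  unfolding walk_def
proof (intro allI impI)
  fix j assume j: "j < m"
  have k: "(i + j) mod n < n" using n_pos by simp
  have "(add ((i + j) mod n) (f1 j) (f2 j), g1 j + g2 j, add (nxt n ((i + j) mod n)) (f1 (Suc j)) (f2 (Suc j)))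
      \<in> E ((i + j) mod n)"
    using Eadd[OF k edge_level[OF w1 s1 i j] edge_level[OF w2 s2 i j]] .
  then show "(add ((i + j) mod n) (f1 j) (f2 j), g1 j + g2 j, add ((i + Suc j) mod n) (f1 (Suc j)) (f2 (Suc j)))
      \<in> edges n E" using nxt_mod inE[OF k] by metis
qed

lemma walk_sm:
  assumes i: "i < n" and w1: "walk n E f1 g1 m" and s1: "f1 0 \<in> V i"
  shows "walk n E (\<lambda>j. sm ((i + j) mod n) s (f1 j)) (\<lambda>j. s * g1 j) m"
  unfolding walk_def
proof (intro allI impI)
  fix j assume j: "j < m"
  have k: "(i + j) mod n < n" using n_pos by simp
  have "(sm ((i + j) mod n) s (f1 j), s * g1 j, sm (nxt n ((i + j) mod n)) s (f1 (Suc j)))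
      \<in> E ((i + j) mod n)"
    using Esm[OF k edge_level[OF w1 s1 i j]] .
  then show "(sm ((i + j) mod n) s (f1 j), s * g1 j, sm ((i + Suc j) mod n) s (f1 (Suc j))) \<in> edges n E"
    using nxt_mod inE[OF k] by metis
qed

lemma walk_zero: "walk n E (\<lambda>j. z ((i + j) mod n)) (\<lambda>_. 0) m"
  unfolding walk_def
proof (intro allI impI)
  fix j assume j: "j < m"
  have k: "(i + j) mod n < n" using n_pos by simp
  show "(z ((i + j) mod n), 0, z ((i + Suc j) mod n)) \<in> edges n E"
    using Ez[OF k] nxt_mod inE[OF k] by metis
qed

definition P :: "nat \<Rightarrow> 'v \<Rightarrow> 'v \<Rightarrow> bool" where
  "P i x y \<longleftrightarrow> (\<exists>f g. walk n E f g n \<and> f 0 = x \<and> f n = y)"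

abbreviation neg :: "nat \<Rightarrow> 'v \<Rightarrow> 'v" where "neg i x \<equiv> sm i (-1) x"

lemma P_end: "i < n \<Longrightarrow> x \<in> V i \<Longrightarrow> P i x y \<Longrightarrow> y \<in> V i"
  unfolding P_def using level by fastforce

lemma P_add: assumes i: "i < n" and x: "x \<in> V i" "x' \<in> V i" and p: "P i x y" "P i x' y'"
  shows "P i (add i x x') (add i y y')"
proof -
  obtain f1 g1 f2 g2 where "walk n E f1 g1 n" "f1 0 = x" "f1 n = y" "walk n E f2 g2 n" "f2 0 = x'" "f2 n = y'"
    using p unfolding P_def by blast
  then show ?thesis using walk_add[of i f1 g1 n f2 g2] i x unfolding P_def by fastforce
qed

lemma P_sm: assumes i: "i < n" and x: "x \<in> V i" and p: "P i x y"
  shows "P i (sm i s x) (sm i s y)"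
proof -
  obtain f1 g1 where "walk n E f1 g1 n" "f1 0 = x" "f1 n = y"
    using p unfolding P_def by blast
  then show ?thesis using walk_sm[of i f1 g1 n s] i x unfolding P_def by fastforce
qed

lemma P_z: "i < n \<Longrightarrow> P i (z i) (z i)"
  unfolding P_def using walk_zero[of i n] by fastforce

lemma P_sub: assumes i: "i < n" and x: "x \<in> V i" "x' \<in> V i" and p: "P i x y" "P i x' y'"
  shows "P i (add i x (neg i x')) (add i y (neg i y'))"
  using P_add[OF i x(1) _ p(1) P_sm[OF i x(2) p(2)]] vs_sm[OF VS[OF i]] x by blast

end




context lin begin

lemma P_refl:
  assumes ar: "almost_reduced n V E" and i: "i < n" and x: "x \<in> V i"
  shows "P i x x"
proof -
  have "x \<in> vertices n V" using i x unfolding vertices_def by blast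
  then obtain vs as where cy: "(vs, as) \<in> cycles n V E" and xs: "x \<in> set vs"
    using ar unfolding almost_reduced_def by blast
  then have p: "is_path n E n vs as" and v0: "vs ! 0 \<in> V 0" and cl: "vs ! n = vs ! 0"
    unfolding cycles_def by auto
  have w0: "walk n E (nth vs) (nth as) n" using is_path_walk[OF p] .
  obtain j where j: "j < Suc n" "vs ! j = x" using xs p unfolding is_path_def by (metis in_set_conv_nth)
  let ?r = "j mod n"
  have xr: "vs ! ?r = x"
  proof (cases "j < n")
    case True then show ?thesis using j by simp
  next
    case False then have "j = n" using j by simp
    then show ?thesis using j cl by simp
  qed
  have w: "walk n E (\<lambda>t. vs ! ((t + ?r) mod n)) (\<lambda>t. as ! ((t + ?r) mod n)) n"
    by (rule rotate_walk[OF w0 cl])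
  then show ?thesis unfolding P_def using xr n_pos by fastforce
qed

lemma P_trans:
  assumes ar: "almost_reduced n V E" and i: "i < n"
  shows "walk n E f g (k * n) \<Longrightarrow> f 0 \<in> V i \<Longrightarrow> P i (f 0) (f (k * n))"
proof (induction k)
  case 0 then show ?case using P_refl[OF ar i] by simp
next
  case (Suc k)
  have wp: "walk n E f g (k * n)" using Suc.prems unfolding walk_def by simp
  have p1: "P i (f 0) (f (k * n))" using Suc.IH wp Suc.prems by blast
  have y: "f (k * n) \<in> V i" using level[OF wp Suc.prems(2) i, of "k * n"] i by (simp add: mod_add_left_eq)
  have ws: "walk n E (\<lambda>j. f (k * n + j)) (\<lambda>j. g (k * n + j)) n"
    using Suc.prems(1) unfolding walk_def by simp
  have p2: "P i (f (k * n)) (f (k * n + n))" using ws unfolding P_def by fastforce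
  have p3: "P i (f (k * n)) (f (k * n))" using P_refl[OF ar i y] .
  have x: "f 0 \<in> V i" using Suc.prems by simp
  have w: "f (k * n + n) \<in> V i" using P_end[OF i y p2] .
  have "P i (add i (f 0) (f (k * n))) (add i (f (k * n)) (f (k * n + n)))"
    using P_add[OF i x y p1 p2] .
  from P_sub[OF i _ y this p3]
  have "P i (add i (add i (f 0) (f (k * n))) (neg i (f (k * n))))
            (add i (add i (f (k * n)) (f (k * n + n))) (neg i (f (k * n))))"
    using vs_add[OF VS[OF i]] x y by blast
  then show ?case using vs_c1[OF VS[OF i] x y] vs_c2[OF VS[OF i] w y] by (simp add: add.commute)
qed

lemma dir2:
  assumes ar: "almost_reduced n V E" and cn: "connected_trellis n V E" and fr: "fragment_one_to_one n V E"
  shows "\<not> mergeable n V E \<and> one_to_one n V E"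
proof
  show "one_to_one n V E"
    unfolding one_to_one_def
  proof (intro ballI impI)
    fix c d assume c: "c \<in> cycles n V E" and d: "d \<in> cycles n V E" and cd: "c \<noteq> d"
    obtain vs as vs' as' where "c = (vs, as)" "d = (vs', as')" by fastforce
    moreover have "is_path n E n vs as" "vs ! 0 \<in> V 0" using c calculation unfolding cycles_def by auto
    moreover have "is_path n E n vs' as'" "vs' ! 0 \<in> V 0" using d calculation unfolding cycles_def by auto
    ultimately show "snd c \<noteq> snd d"
      using fr[unfolded fragment_one_to_one_def, rule_format, of 0 vs as vs' as'] cd n_pos by auto
  qed
  show "\<not> mergeable n V E"
  proof
    assume "mergeable n V E"
    then obtain i v w where i: "i < n" and v: "v \<in> V i" and w: "w \<in> V i" and vw: "v \<noteq> w"
      and ce: "code n (merge_V v w V) (merge_E v w E) = code n V E"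
      unfolding mergeable_def by blast
    interpret M: trel n "merge_V v w V" "merge_E v w E" using merge_trel[OF i v w] .
    have "v \<in> vertices n V" "w \<in> vertices n V" using i v w unfolding vertices_def by auto
    then obtain m vs as where p: "is_path n E m vs as" "vs ! 0 = v" "vs ! m = w"
      using cn vw unfolding connected_trellis_def by blast
    have wm: "walk n E (nth vs) (nth as) m" using is_path_walk[OF p(1)] .
    have "w \<in> V ((i + m) mod n)" using level[OF wm _ i, of m] p v by simp
    then have "(i + m) mod n = i" using disj w i n_pos by (meson mod_less_divisor)
    then have "m mod n = 0" using modz i by blast
    then have "m = (m div n) * n" using div_mult_mod_eq[of m n] by simp
    then obtain k where k: "m = k * n" by blast
    have "P i v w" using P_trans[OF ar i, of "nth vs" "nth as" k] wm k p v by simp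
    then obtain f g where fg: "walk n E f g n" "f 0 = v" "f n = w" unfolding P_def by blast
    have "walk n (merge_E v w E) (mg v w \<circ> f) g n" by (rule walk_merge[OF fg(1)])
    moreover have "(mg v w \<circ> f) 0 \<in> merge_V v w V i" using fg v unfolding merge_V_def by simp
    moreover have "(mg v w \<circ> f) n = (mg v w \<circ> f) 0" using fg unfolding mg_def by simp
    ultimately have "rot n i g \<in> code n V E" using M.C1'[of "mg v w \<circ> f" g i] i ce by simp
    then obtain f2 g2 where f2: "walk n E f2 g2 n" "f2 0 \<in> V i" "f2 n = f2 0" "rot n i g2 = rot n i g"
      using C2 i by blast
    have geq: "\<And>t. t < n \<Longrightarrow> g2 t = g t" using rot_eq[OF f2(4) i] .
    have pa: "is_path n E n (map f [0..<Suc n]) (map g [0..<n])" using walk_is_path[OF fg(1)] .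
    have pb: "is_path n E n (map f2 [0..<Suc n]) (map g [0..<n])"
    proof -
      have "map g2 [0..<n] = map g [0..<n]" using geq by simp
      then show ?thesis using walk_is_path[OF f2(1)] by metis
    qed
    have ne: "map f [0..<Suc n] \<noteq> map f2 [0..<Suc n]"
    proof
      assume eq: "map f [0..<Suc n] = map f2 [0..<Suc n]"
      have "f 0 = f2 0" using arg_cong[OF eq, of "\<lambda>l. l ! 0"] by (simp del: upt_Suc)
      moreover have "f n = f2 n" using arg_cong[OF eq, of "\<lambda>l. l ! n"] by (simp del: upt_Suc)
      ultimately show False using fg f2 vw by simp
    qed
    have "map f [0..<Suc n] ! 0 \<in> V i" "map f2 [0..<Suc n] ! 0 \<in> V i" using fg f2 v
      by (simp_all del: upt_Suc)
    then show False using fr pa pb ne i unfolding fragment_one_to_one_def by blast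
  qed
qed

end



lemma walk_concat:
  assumes w1: "walk n E f g a" and w2: "walk n E f2 g2 b" and c: "f2 0 = f a"
  shows "walk n E (\<lambda>t. if t \<le> a then f t else f2 (t - a)) (\<lambda>t. if t < a then g t else g2 (t - a)) (a + b)"
  unfolding walk_def
proof (intro allI impI)
  fix j assume j: "j < a + b"
  show "((if j \<le> a then f j else f2 (j - a)), (if j < a then g j else g2 (j - a)),
         (if Suc j \<le> a then f (Suc j) else f2 (Suc j - a))) \<in> edges n E"
  proof (cases "j < a")
    case True then show ?thesis using w1 unfolding walk_def by simp
  next
    case False
    then have "j - a < b" "Suc j - a = Suc (j - a)" using j by auto
    then have "(f2 (j - a), g2 (j - a), f2 (Suc j - a)) \<in> edges n E" using w2 unfolding walk_def by simp
    moreover have "(if j \<le> a then f j else f2 (j - a)) = f2 (j - a)" using False c by auto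
    ultimately show ?thesis using False by simp
  qed
qed

context lin begin

definition WL :: "nat \<Rightarrow> 'v \<Rightarrow> 'v \<Rightarrow> (nat \<Rightarrow> 'f) \<Rightarrow> bool" where
  "WL i x y g \<longleftrightarrow> (\<exists>f. walk n E f g n \<and> f 0 = x \<and> f n = y)"

lemma WL_add: assumes i: "i < n" and x: "x \<in> V i" "x' \<in> V i" and p: "WL i x y g" "WL i x' y' g'"
  shows "WL i (add i x x') (add i y y') (\<lambda>t. g t + g' t)"
proof -
  obtain f1 f2 where "walk n E f1 g n" "f1 0 = x" "f1 n = y" "walk n E f2 g' n" "f2 0 = x'" "f2 n = y'"
    using p unfolding WL_def by blast
  then show ?thesis using walk_add[of i f1 g n f2 g'] i x unfolding WL_def by fastforce
qed

lemma WL_sm: assumes i: "i < n" and x: "x \<in> V i" and p: "WL i x y g"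
  shows "WL i (sm i s x) (sm i s y) (\<lambda>t. s * g t)"
proof -
  obtain f1 where "walk n E f1 g n" "f1 0 = x" "f1 n = y"
    using p unfolding WL_def by blast
  then show ?thesis using walk_sm[of i f1 g n s] i x unfolding WL_def by fastforce
qed

lemma WL_closed: "i < n \<Longrightarrow> x \<in> V i \<Longrightarrow> WL i x x g \<Longrightarrow> rot n i g \<in> code n V E"
  unfolding WL_def using C1' by metis

lemma NM:
  assumes nm: "\<not> mergeable n V E" and i: "i < n" and x: "x \<in> V i" and y: "y \<in> V i" and xy: "x \<noteq> y"
  shows "\<exists>g. (WL i x y g \<or> WL i y x g) \<and> rot n i g \<notin> code n V E"
proof -
  interpret M: trel n "merge_V x y V" "merge_E x y E" using merge_trel[OF i x y] .
  have ne: "code n (merge_V x y V) (merge_E x y E) \<noteq> code n V E"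
    using nm i x y xy unfolding mergeable_def by blast
  have "code n V E \<subseteq> code n (merge_V x y V) (merge_E x y E)" using code_sub[OF i x y] .
  then obtain as where as: "as \<in> code n (merge_V x y V) (merge_E x y E)" "as \<notin> code n V E"
    using ne by blast
  obtain f' g where fg: "walk n (merge_E x y E) f' g n" "f' 0 \<in> merge_V x y V i" "f' n = f' 0" "rot n i g = as"
    using M.C2[OF as(1) i] by blast
  obtain f where f: "walk n E f g n" "f 0 \<in> V i" "f n = f 0 \<or> (f 0 = x \<and> f n = y) \<or> (f 0 = y \<and> f n = x)"
    using lift[OF i x y xy fg(1-3)] by blast
  have "\<not> (f n = f 0)" using C1'[OF f(1) _ f(2) i] as(2) fg(4) by metis
  then have "WL i x y g \<or> WL i y x g" using f unfolding WL_def by blast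
  then show ?thesis using as(2) fg(4) by blast
qed

lemma NMP:
  assumes nm: "\<not> mergeable n V E" and i: "i < n" and x: "x \<in> V i" and y: "y \<in> V i"
  shows "P i x y \<or> P i y x \<or> x \<noteq> y \<and> False \<or> x = y \<and> x \<noteq> z i \<or> x = y \<and> P i x x"
  using NM[OF nm i x y] P_z[OF i] unfolding P_def WL_def by metis

lemma NMz:
  assumes nm: "\<not> mergeable n V E" and i: "i < n" and y: "y \<in> V i"
  shows "P i (z i) y \<or> P i y (z i)"
proof (cases "y = z i")
  case True then show ?thesis using P_z[OF i] by simp
next
  case False
  then show ?thesis using NM[OF nm i vs_z[OF VS[OF i]] y] unfolding P_def WL_def by metis
qed

lemma NM2:
  assumes nm: "\<not> mergeable n V E" and i: "i < n" and x: "x \<in> V i" and y: "y \<in> V i"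
  shows "P i x y \<or> P i y x \<or> x = y"
  using NM[OF nm i x y] unfolding P_def WL_def by metis

lemma Kclaim:
  assumes nm: "\<not> mergeable n V E" and i: "i < n"
  shows "(\<forall>x\<in>V i. P i (z i) x) \<or> (\<forall>x\<in>V i. P i x (z i))"
proof (rule ccontr)
  assume "\<not> ?thesis"
  then obtain a b where a: "a \<in> V i" "\<not> P i (z i) a" and b: "b \<in> V i" "\<not> P i b (z i)" by blast
  have VSi: "vector_space_on (V i) (add i) (z i) (sm i)" using VS[OF i] .
  have z: "z i \<in> V i" using vs_z[OF VSi] .
  have pa: "P i a (z i)" using NMz[OF nm i a(1)] a(2) by blast
  have pb: "P i (z i) b" using NMz[OF nm i b(1)] b(2) by blast
  have c: "add i a b \<in> V i" using vs_add[OF VSi a(1) b(1)] .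
  have zz: "add i (z i) (neg i (z i)) = z i" using vs_neg[OF VSi z] .
  show False
  proof (cases "P i (z i) (add i a b)")
    case True
    have "P i (add i (z i) (neg i (z i))) (add i (add i a b) (neg i b))"
      using P_sub[OF i z z True pb] .
    then have "P i (z i) a" using zz vs_c1[OF VSi a(1) b(1)] by simp
    then show False using a by simp
  next
    case False
    then have pc: "P i (add i a b) (z i)" using NMz[OF nm i c] by blast
    have "P i (add i (add i a b) (neg i a)) (add i (z i) (neg i (z i)))"
      using P_sub[OF i c a(1) pc pa] .
    then have "P i b (z i)" using zz vs_c2[OF VSi b(1) a(1)] by simp
    then show False using b by simp
  qed
qed

lemma Rfull:
  assumes nm: "\<not> mergeable n V E" and i: "i < n" and u: "u \<in> V i" and w: "w \<in> V i"
  shows "P i u w"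
proof -
  have VSi: "vector_space_on (V i) (add i) (z i) (sm i)" using VS[OF i] .
  have z: "z i \<in> V i" using vs_z[OF VSi] .
  show ?thesis
  proof (cases "\<forall>x\<in>V i. P i (z i) x")
    case True
    obtain f g where fg: "walk n E f g n" "f 0 = u" using fwd[OF u i] by blast
    have puy: "P i u (f n)" using fg unfolding P_def by blast
    have y: "f n \<in> V i" using P_end[OF i u puy] .
    have d: "add i w (neg i (f n)) \<in> V i" using vs_add[OF VSi w vs_sm[OF VSi y]] .
    have "P i (z i) (add i w (neg i (f n)))" using True d by blast
    from P_add[OF i u z puy this]
    have "P i (add i u (z i)) (add i (f n) (add i w (neg i (f n))))" .
    then show ?thesis using vs_zr[OF VSi u] vs_c3[OF VSi w y] by simp
  next
    case False
    then have allz: "\<forall>x\<in>V i. P i x (z i)" using Kclaim[OF nm i] by blast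
    obtain f g j where fg: "j < n" "walk n E f g n" "f n = w" "f 0 \<in> V j" using bwd[OF w i] by blast
    have "f n \<in> V ((j + n) mod n)" using level[OF fg(2) fg(4) fg(1), of n] by simp
    then have "w \<in> V j" using fg by simp
    then have ji: "j = i" using disj fg(1) i w by blast
    then have y: "f 0 \<in> V i" using fg by simp
    have pyw: "P i (f 0) w" using fg unfolding P_def by blast
    have d: "add i u (neg i (f 0)) \<in> V i" using vs_add[OF VSi u vs_sm[OF VSi y]] .
    have "P i (add i u (neg i (f 0))) (z i)" using allz d by blast
    from P_add[OF i y d pyw this]
    have "P i (add i (f 0) (add i u (neg i (f 0)))) (add i w (z i))" .
    then show ?thesis using vs_zr[OF VSi w] vs_c3[OF VSi u y] by simp
  qed
qed

lemma connected:
  assumes nm: "\<not> mergeable n V E"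
  shows "connected_trellis n V E"
  unfolding connected_trellis_def
proof (intro ballI impI)
  fix v w assume v: "v \<in> vertices n V" and w: "w \<in> vertices n V" and vw: "v \<noteq> w"
  obtain i where i: "i < n" "v \<in> V i" using v unfolding vertices_def by blast
  obtain j where j: "j < n" "w \<in> V j" using w unfolding vertices_def by blast
  define d where "d = (j + n - i) mod n"
  obtain f g where fg: "walk n E f g d" "f 0 = v" using fwd[OF i(2) i(1)] by blast
  have "(i + d) mod n = (i + (j + n - i)) mod n" unfolding d_def by (simp add: mod_add_right_eq)
  also have "i + (j + n - i) = j + n" using i by simp
  finally have "(i + d) mod n = j" using j by simp
  then have fd: "f d \<in> V j" using level[OF fg(1) _ i(1), of d] fg i by simp
  have "P j (f d) w" using Rfull[OF nm j(1) fd j(2)] .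
  then obtain f2 g2 where f2: "walk n E f2 g2 n" "f2 0 = f d" "f2 n = w" unfolding P_def by blast
  have wc: "walk n E (\<lambda>t. if t \<le> d then f t else f2 (t - d)) (\<lambda>t. if t < d then g t else g2 (t - d)) (d + n)"
    using walk_concat[OF fg(1) f2(1) f2(2)] .
  let ?F = "\<lambda>t. if t \<le> d then f t else f2 (t - d)"
  have "?F 0 = v" using fg by simp
  moreover have "?F (d + n) = w" using f2 n_pos by simp
  ultimately show "\<exists>m vs as. is_path n E m vs as \<and> vs ! 0 = v \<and> vs ! m = w"
    using walk_is_path[OF wc] by (intro exI[of _ "d + n"]) (force simp del: upt_Suc)
qed

end



context lin begin

lemma frag:
  assumes nm: "\<not> mergeable n V E" and oo: "one_to_one n V E"
  shows "fragment_one_to_one n V E"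
  unfolding fragment_one_to_one_def
proof (intro allI impI)
  fix i vs as vs' as'
  assume i: "i < n" and H: "is_path n E n vs as \<and> vs ! 0 \<in> V i \<and> is_path n E n vs' as' \<and> vs' ! 0 \<in> V i
     \<and> (vs, as) \<noteq> (vs', as')"
  have VSi: "vector_space_on (V i) (add i) (z i) (sm i)" using VS[OF i] .
  show "as \<noteq> as'"
  proof
    assume eq: "as = as'"
    have p1: "is_path n E n vs as" and s1: "vs ! 0 \<in> V i" and p2: "is_path n E n vs' as"
      and s2: "vs' ! 0 \<in> V i" and nev: "vs \<noteq> vs'" using H eq by auto
    let ?f1 = "nth vs" and ?f2 = "nth vs'" and ?g = "nth as"
    have w1: "walk n E ?f1 ?g n" using is_path_walk[OF p1] .
    have w2: "walk n E ?f2 ?g n" using is_path_walk[OF p2] .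
    obtain j where j: "j \<le> n" "vs ! j \<noteq> vs' ! j"
    proof -
      have "length vs = Suc n" "length vs' = Suc n" using p1 p2 unfolding is_path_def by auto
      then show ?thesis using nev that by (metis less_Suc_eq_le nth_equalityI)
    qed
    have ws: "walk n E (\<lambda>t. sm ((i + t) mod n) (-1) (?f2 t)) (\<lambda>t. -1 * ?g t) n"
      using walk_sm[OF i w2 s2] .
    have ws0: "(\<lambda>t. sm ((i + t) mod n) (-1) (?f2 t)) 0 \<in> V i" using vs_sm[OF VSi s2] i by simp
    define DF where "DF t = add ((i + t) mod n) (?f1 t) (sm ((i + t) mod n) (-1) (?f2 t))" for t
    define DG where "DG t = ?g t + -1 * ?g t" for t
    have wd: "walk n E DF DG n" unfolding DF_def DG_def using walk_add[OF i w1 ws s1 ws0] .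
    have DG0: "\<And>t. DG t = 0" unfolding DG_def by simp
    have d0: "DF 0 \<in> V i" unfolding DF_def using vs_add[OF VSi s1 vs_sm[OF VSi s2]] i by simp
    have dn: "DF n \<in> V i" using level[OF wd d0 i, of n] i by simp
    have dnz: "DF j \<noteq> z ((i + j) mod n)"
    proof
      assume a: "DF j = z ((i + j) mod n)"
      let ?k = "(i + j) mod n"
      have k: "?k < n" using n_pos by simp
      have "vs ! j \<in> V ?k" "vs' ! j \<in> V ?k" using level[OF w1 s1 i j(1)] level[OF w2 s2 i j(1)] by auto
      then have "vs ! j = vs' ! j" using vs_eq[OF VS[OF k]] a unfolding DF_def by blast
      then show False using j by simp
    qed
    have WD: "WL i (DF 0) (DF n) DG" unfolding WL_def using wd by blast
    show False
    proof (cases "DF 0 = DF n")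
      case True
      have cl: "DF n = DF 0" using True by simp
      have c1: "(map (\<lambda>t. DF ((t + (n - i)) mod n)) [0..<Suc n], rot n i DG) \<in> cycles n V E"
        using C1[OF wd cl d0 i] .
      have wz: "walk n E (\<lambda>t. z ((i + t) mod n)) (\<lambda>_. 0) n" using walk_zero .
      have z0: "(\<lambda>t. z ((i + t) mod n)) 0 \<in> V i" using vs_z[OF VSi] i by simp
      have c0: "(map (\<lambda>t. (\<lambda>t. z ((i + t) mod n)) ((t + (n - i)) mod n)) [0..<Suc n], rot n i (\<lambda>_. 0)) \<in> cycles n V E"
        using C1[OF wz _ z0 i] by simp
      have lab: "rot n i DG = rot n i (\<lambda>_. 0)" using rot_cong DG0 by metis
      obtain j' where j': "j' < n" "DF j' \<noteq> z ((i + j') mod n)"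
      proof (cases "j < n")
        case True then show ?thesis using that dnz by blast
      next
        case False then have "j = n" using j by simp
        then have "DF 0 \<noteq> z ((i + 0) mod n)" using dnz cl i by simp
        then show ?thesis using that n_pos by blast
      qed
      define p where "p = (j' + i) mod n"
      have pn: "p < n" using n_pos by (simp add: p_def)
      have pp: "(p + (n - i)) mod n = j'"
      proof -
        have "(p + (n - i)) mod n = (j' + i + (n - i)) mod n" unfolding p_def by (simp add: mod_add_left_eq)
        also have "j' + i + (n - i) = j' + n" using i by simp
        finally show ?thesis using j' by simp
      qed
      have "map (\<lambda>t. DF ((t + (n - i)) mod n)) [0..<Suc n] ! p \<noteq>
            map (\<lambda>t. (\<lambda>t. z ((i + t) mod n)) ((t + (n - i)) mod n)) [0..<Suc n] ! p"
        using pn pp j' by (simp del: upt_Suc add: nth_map_upt)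
      then have "(map (\<lambda>t. DF ((t + (n - i)) mod n)) [0..<Suc n], rot n i DG) \<noteq>
            (map (\<lambda>t. (\<lambda>t. z ((i + t) mod n)) ((t + (n - i)) mod n)) [0..<Suc n], rot n i (\<lambda>_. 0))"
        by (metis fst_conv)
      then show False using oo c1 c0 lab unfolding one_to_one_def by fastforce
    next
      case False
      obtain gs where gs: "WL i (DF 0) (DF n) gs \<or> WL i (DF n) (DF 0) gs" "rot n i gs \<notin> code n V E"
        using NM[OF nm i d0 dn False] by blast
      from gs(1) show False
      proof
        assume a: "WL i (DF 0) (DF n) gs"
        have "WL i (sm i (-1) (DF 0)) (sm i (-1) (DF n)) (\<lambda>t. -1 * DG t)" using WL_sm[OF i d0 WD] .
        from WL_add[OF i d0 vs_sm[OF VSi d0] a this]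
        have "WL i (z i) (z i) (\<lambda>t. gs t + -1 * DG t)" using vs_neg[OF VSi d0] vs_neg[OF VSi dn] by simp
        then have "rot n i (\<lambda>t. gs t + -1 * DG t) \<in> code n V E" using WL_closed[OF i vs_z[OF VSi]] by blast
        moreover have "rot n i (\<lambda>t. gs t + -1 * DG t) = rot n i gs" using DG0 by (intro rot_cong) simp
        ultimately show False using gs(2) by simp
      next
        assume a: "WL i (DF n) (DF 0) gs"
        from WL_add[OF i dn d0 a WD]
        have "WL i (add i (DF n) (DF 0)) (add i (DF n) (DF 0)) (\<lambda>t. gs t + DG t)"
          using vs_comm[OF VSi d0 dn] by simp
        then have "rot n i (\<lambda>t. gs t + DG t) \<in> code n V E"
          using WL_closed[OF i vs_add[OF VSi dn d0]] by blast
        moreover have "rot n i (\<lambda>t. gs t + DG t) = rot n i gs" using DG0 by (intro rot_cong) simp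
        ultimately show False using gs(2) by simp
      qed
    qed
  qed
qed

end

theorem mainTheorem14:
  fixes n :: nat and V :: "nat \<Rightarrow> 'v set" and E :: "nat \<Rightarrow> ('v \<times> 'f::{field,finite} \<times> 'v) set"
  assumes "trellis n V E" and "linear_trellis n V E"
  shows "(\<not> mergeable n V E \<and> one_to_one n V E
            \<longrightarrow> connected_trellis n V E \<and> fragment_one_to_one n V E)
       \<and> (almost_reduced n V E \<and> connected_trellis n V E \<and> fragment_one_to_one n V E
            \<longrightarrow> \<not> mergeable n V E \<and> one_to_one n V E)"
proof -
  obtain add :: "nat \<Rightarrow> 'v \<Rightarrow> 'v \<Rightarrow> 'v" and z :: "nat \<Rightarrow> 'v" and sm :: "nat \<Rightarrow> 'f \<Rightarrow> 'v \<Rightarrow> 'v" where L: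
    "\<forall>i<n. vector_space_on (V i) (add i) (z i) (sm i)
        \<and> (z i, 0, z (nxt n i)) \<in> E i
        \<and> (\<forall>(x, a, y)\<in>E i. \<forall>(x', a', y')\<in>E i.
              (add i x x', a + a', add (nxt n i) y y') \<in> E i)
        \<and> (\<forall>s. \<forall>(x, a, y)\<in>E i. (sm i s x, s * a, sm (nxt n i) s y) \<in> E i)"
    using assms(2) unfolding linear_trellis_def by blast
  interpret L: lin n V E add z sm
    by (unfold_locales; (rule assms(1))?; (rule L)?)
  show ?thesis using L.connected L.frag L.dir2 by blast
qed


end
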